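(* Let $n\ge 1$, $r\ge 0$, and let $J\subseteq\Delta^r_n$ be a nonempty subset. Then $J$ is M-convex if and only if its characteristic function $\chi_J\colon\Delta^r_n\to\mathbb K$ satisfies the Plücker relations \[ \sum_{k=0}^s \chi_J\big(\alpha+\epsilon_{i_0}+\dots+\widehat{\epsilon_{i_k}}+\dots+\epsilon_{i_s}\big)\cdot\chi_J\big(\alpha+\epsilon_{i_k}+\epsilon_{j_2}+\dots+\epsilon_{j_s}\big)\ \in\ N_{\mathbb K} \] for every $s\in\{2,\dots,r\}$, every $\alpha\in\Delta^{r-s}_n$ with $\delta^-_J\le\alpha$, and all $i_0,\dots,i_s,j_2,\dots,j_s\in[n]$ such that $\alpha+\epsilon_{i_0}+\dots+\epsilon_{i_s}+\epsilon_{j_2}+\dots+\epsilon_{j_s}\le\delta^+_J$. (Here the hat means the term is omitted.)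
   Context: $\Delta^r_n=\{\alpha\in\mathbb N^n:\alpha_1+\dots+\alpha_n=r\}$; $\epsilon_i$ is the $i$-th standard basis vector; $\le$ is the componentwise partial order on $\mathbb Z^n$. A nonempty $J\subseteq\Delta^r_n$ is M-convex if for all $\alpha,\beta\in J$ and every $i\in[n]$ with $\alpha_i<\beta_i$ there is $j\in[n]$ with $\alpha_j>\beta_j$ such that both $\alpha+\epsilon_i-\epsilon_j$ and $\beta-\epsilon_i+\epsilon_j$ lie in $J$. For finite $J$, $\delta^-_J=\inf J$ and $\delta^+_J=\sup J$ are the vectors with $\delta^-_{J,i}=\min\{\alpha_i:\alpha\in J\}$ and $\delta^+_{J,i}=\max\{\alpha_i:\alpha\in J\}$. The Krasner hyperfield is $\mathbb K=\{0,1\}$; a formal sum of elements of $\mathbb K$ lies in its null set $N_{\mathbb K}$ if and only if the number of summands equal to $1$ is not exactly one. $\chi_J(\alpha)=1$ if $\alpha\in J$ and $0$ otherwise. *)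

theory Defs
  imports Main
begin

text \<open>Vectors in N^n are functions nat => nat, indexed by [n] = {0..<n},
  vanishing outside [n].\<close>

definition Delta :: "nat \<Rightarrow> nat \<Rightarrow> (nat \<Rightarrow> nat) set" where
  "Delta r n = {\<alpha>. (\<forall>i\<ge>n. \<alpha> i = 0) \<and> (\<Sum>i<n. \<alpha> i) = r}"

definition eps :: "nat \<Rightarrow> nat \<Rightarrow> nat" where
  "eps i = (\<lambda>k. if k = i then 1 else 0)"

definition M_convex :: "nat \<Rightarrow> (nat \<Rightarrow> nat) set \<Rightarrow> bool" where
  "M_convex n J \<longleftrightarrow> J \<noteq> {} \<and>
     (\<forall>\<alpha>\<in>J. \<forall>\<beta>\<in>J. \<forall>i<n. \<alpha> i < \<beta> i \<longrightarrow>
        (\<exists>j<n. \<alpha> j > \<beta> j \<and>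
           (\<lambda>k. \<alpha> k + eps i k - eps j k) \<in> J \<and>
           (\<lambda>k. \<beta> k - eps i k + eps j k) \<in> J))"

definition delta_minus :: "(nat \<Rightarrow> nat) set \<Rightarrow> nat \<Rightarrow> nat" where
  "delta_minus J = (\<lambda>k. Min ((\<lambda>\<alpha>. \<alpha> k) ` J))"

definition delta_plus :: "(nat \<Rightarrow> nat) set \<Rightarrow> nat \<Rightarrow> nat" where
  "delta_plus J = (\<lambda>k. Max ((\<lambda>\<alpha>. \<alpha> k) ` J))"

text \<open>Krasner hyperfield K = {0,1}, modelled inside nat; multiplication of K agrees
  with multiplication of nat on {0,1}.\<close>

definition krasner_null :: "nat list \<Rightarrow> bool" where
  "krasner_null xs \<longleftrightarrow> length (filter (\<lambda>x. x = 1) xs) \<noteq> 1"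

definition chi :: "(nat \<Rightarrow> nat) set \<Rightarrow> (nat \<Rightarrow> nat) \<Rightarrow> nat" where
  "chi J \<alpha> = (if \<alpha> \<in> J then 1 else 0)"

text \<open>Pluecker relations: i gives i_0..i_s, j gives j_2..j_s.\<close>

definition pluecker :: "nat \<Rightarrow> nat \<Rightarrow> (nat \<Rightarrow> nat) set \<Rightarrow> bool" where
  "pluecker n r J \<longleftrightarrow>
    (\<forall>s \<in> {2..r}. \<forall>\<alpha> \<in> Delta (r - s) n. \<forall>i j :: nat \<Rightarrow> nat.
      (\<forall>k<n. delta_minus J k \<le> \<alpha> k) \<longrightarrow>
      (\<forall>l\<in>{0..s}. i l < n) \<longrightarrow> (\<forall>l\<in>{2..s}. j l < n) \<longrightarrow>
      (\<forall>t<n. \<alpha> t + (\<Sum>l\<in>{0..s}. eps (i l) t) + (\<Sum>l\<in>{2..s}. eps (j l) t)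
               \<le> delta_plus J t) \<longrightarrow>
      krasner_null (map (\<lambda>k.
          chi J (\<lambda>t. \<alpha> t + (\<Sum>l\<in>{0..s} - {k}. eps (i l) t)) *
          chi J (\<lambda>t. \<alpha> t + eps (i k) t + (\<Sum>l\<in>{2..s}. eps (j l) t)))
        [0..<s+1]))"

end

theory Submission
  imports Defs
begin

lemma finite_Delta: "finite (Delta r n)"
proof -
  have "(\<lambda>f. map f [0..<n]) ` Delta r n \<subseteq> {xs. set xs \<subseteq> {..r} \<and> length xs = n}"
  proof (clarsimp)
    fix f t assume f: "f \<in> Delta r n" and t: "t < n"
    have "f t \<le> (\<Sum>t<n. f t)" by (rule member_le_sum) (use t in auto)
    then show "f t \<le> r" using f by (simp add: Delta_def)
  qed
  then have "finite ((\<lambda>f. map f [0..<n]) ` Delta r n)"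
    by (rule finite_subset) (simp add: finite_lists_length_eq)
  moreover have "inj_on (\<lambda>f. map f [0..<n]) (Delta r n)"
  proof (rule inj_onI)
    fix f g assume f: "f \<in> Delta r n" and g: "g \<in> Delta r n" and e: "map f [0..<n] = map g [0..<n]"
    show "f = g"
    proof
      fix t show "f t = g t"
      proof (cases "t < n")
        case True then show ?thesis using e by (simp add: map_eq_conv)
      next
        case False then show ?thesis using f g by (simp add: Delta_def)
      qed
    qed
  qed
  ultimately show ?thesis by (rule finite_imageD)
qed

lemma count_two:
  assumes "k0 < N" "m < N" "k0 \<noteq> m" "F k0 = (1::nat)" "F m = 1"
  shows "length (filter (\<lambda>x. x = 1) (map F [0..<N])) \<ge> 2"
proof -
  have "length (filter (\<lambda>x. x = 1) (map F [0..<N])) = card {i. i < N \<and> F i = 1}"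
    by (simp add: length_filter_conv_card cong: conj_cong)
  moreover have "card {k0, m} \<le> card {i. i < N \<and> F i = 1}"
    by (rule card_mono) (use assms in auto)
  ultimately show ?thesis using assms(3) by simp
qed

lemma only_zero:
  assumes "F 0 = (1::nat)" "krasner_null (map F [0..<Suc s])"
  shows "\<exists>k\<in>{1..s}. F k = 1"
proof (rule ccontr)
  assume "\<not> ?thesis"
  then have "filter (\<lambda>x. x = 1) (map F [1..<Suc s]) = []"
    by (auto simp: filter_empty_conv)
  moreover have "map F [0..<Suc s] = F 0 # map F [1..<Suc s]" by (subst upt_conv_Cons) auto
  ultimately show False using assms by (simp add: krasner_null_def)
qed

lemma enum_aux:
  "(\<forall>t\<ge>n. f t = 0) \<Longrightarrow> (\<Sum>t<n. f t) = m \<Longrightarrow>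
   \<exists>g. (\<forall>l\<in>{c..<c+m}. g l < n) \<and> (\<forall>t. (\<Sum>l\<in>{c..<c+m}. eps (g l) t) = f t)"
proof (induction m arbitrary: f)
  case 0
  then have "f t = 0" for t by (cases "t < n") auto
  then show ?case by auto
next
  case (Suc m)
  obtain t0 where t0: "t0 < n" "f t0 > 0"
  proof (rule ccontr)
    assume "\<not> thesis"
    then have "\<forall>t<n. f t = 0" using that by auto
    then have "(\<Sum>t<n. f t) = 0" by simp
    with Suc.prems show False by simp
  qed
  define f' where "f' = f(t0 := f t0 - 1)"
  have s1: "(\<Sum>t<n. f t) = f t0 + (\<Sum>t\<in>{..<n}-{t0}. f t)"
    using t0 by (simp add: sum.remove)
  have s2: "(\<Sum>t<n. f' t) = f' t0 + (\<Sum>t\<in>{..<n}-{t0}. f' t)"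
    using t0 by (simp add: sum.remove)
  have "(\<Sum>t\<in>{..<n}-{t0}. f' t) = (\<Sum>t\<in>{..<n}-{t0}. f t)"
    by (rule sum.cong) (auto simp: f'_def)
  then have "(\<Sum>t<n. f' t) = m" using s1 s2 Suc.prems t0 by (simp add: f'_def)
  moreover have "\<forall>t\<ge>n. f' t = 0" using Suc.prems t0 by (auto simp: f'_def)
  ultimately obtain g' where g': "\<forall>l\<in>{c..<c+m}. g' l < n"
    "\<forall>t. (\<Sum>l\<in>{c..<c+m}. eps (g' l) t) = f' t" using Suc.IH by blast
  define g where "g = g'(c+m := t0)"
  have eq: "{c..<c + Suc m} = insert (c+m) {c..<c+m}" by auto
  have "(\<Sum>l\<in>{c..<c+m}. eps (g l) t) = (\<Sum>l\<in>{c..<c+m}. eps (g' l) t)" for t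
    by (rule sum.cong) (auto simp: g_def)
  then have "(\<Sum>l\<in>{c..<c+Suc m}. eps (g l) t) = f t" for t
    using g'(2) t0 unfolding eq by (simp add: g_def f'_def eps_def)
  moreover have "\<forall>l\<in>{c..<c+Suc m}. g l < n" using g'(1) t0 by (auto simp: g_def)
  ultimately show ?case by blast
qed

lemma enum:
  assumes "\<forall>t\<ge>n. f t = 0"
  shows "\<exists>g. (\<forall>l\<in>{c..<c+(\<Sum>t<n. f t)}. g l < n) \<and>
     (\<forall>t. (\<Sum>l\<in>{c..<c+(\<Sum>t<n. f t)}. eps (g l) t) = f t)"
  using enum_aux[OF assms refl] by blast

lemma sum_rem:
  fixes s k :: nat
  assumes "k \<in> {0..s}"
  shows "(\<Sum>l\<in>{0..s} - {k}. eps (I l) (t::nat)) = (\<Sum>l\<in>{0..s}. eps (I l) t) - eps (I k) t"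
proof -
  have "(\<Sum>l\<in>{0..s}. eps (I l) t) = eps (I k) t + (\<Sum>l\<in>{0..s} - {k}. eps (I l) t)"
    using assms by (simp add: sum.remove[of "{0..s}" k])
  then show ?thesis by simp
qed

lemma forward:
  assumes finJ: "finite J" and mc: "M_convex n J"
  shows "pluecker n r J"
  unfolding pluecker_def
proof (intro ballI allI impI)
  fix s :: nat and c I Jf :: "nat \<Rightarrow> nat"
  assume hI: "\<forall>l\<in>{0..s}. I l < n"
  define A where "A k = (\<lambda>t. c t + (\<Sum>l\<in>{0..s} - {k}. eps (I l) t))" for k
  define B where "B k = (\<lambda>t. c t + eps (I k) t + (\<Sum>l\<in>{2..s}. eps (Jf l) t))" for k
  define F where "F k = chi J (A k) * chi J (B k)" for k
  have mapeq: "map (\<lambda>k. chi J (\<lambda>t. c t + (\<Sum>l\<in>{0..s} - {k}. eps (I l) t)) *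
          chi J (\<lambda>t. c t + eps (I k) t + (\<Sum>l\<in>{2..s}. eps (Jf l) t))) [0..<s+1] = map F [0..<s+1]"
    by (simp add: F_def A_def B_def)
  show "krasner_null (map (\<lambda>k. chi J (\<lambda>t. c t + (\<Sum>l\<in>{0..s} - {k}. eps (I l) t)) *
          chi J (\<lambda>t. c t + eps (I k) t + (\<Sum>l\<in>{2..s}. eps (Jf l) t))) [0..<s+1])"
  proof (rule ccontr)
    assume "\<not> ?thesis"
    then have len1: "length (filter (\<lambda>x. x=1) (map F [0..<s+1])) = 1"
      using mapeq krasner_null_def by metis
    then have "filter (\<lambda>x. x=1) (map F [0..<s+1]) \<noteq> []" by (metis length_0_conv zero_neq_one)
    then obtain x where "x \<in> set (filter (\<lambda>x. x=1) (map F [0..<s+1]))"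
      by (meson list.set_sel(1))
    then obtain k0 where k0: "k0 < s+1" "F k0 = 1" by (auto simp del: upt_Suc)
    then have AJ: "A k0 \<in> J" "B k0 \<in> J" by (auto simp: F_def chi_def split: if_splits)
    have tot: "eps (I m) t + eps (I k0) t \<le> (\<Sum>l\<in>{0..s}. eps (I l) t)"
      if "m \<in> {0..s}" "m \<noteq> k0" for m t
    proof -
      have "(\<Sum>l\<in>{m,k0}. eps (I l) t) \<le> (\<Sum>l\<in>{0..s}. eps (I l) t)"
        by (rule sum_mono2) (use that k0 in auto)
      then show ?thesis using that by simp
    qed
    have k0s: "k0 \<in> {0..s}" using k0 by auto
    have "\<exists>m<s+1. m \<noteq> k0 \<and> F m = 1"
    proof (cases "\<exists>m\<in>{0..s}. m \<noteq> k0 \<and> I m = I k0")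
      case True
      then obtain m where m: "m \<in> {0..s}" "m \<noteq> k0" "I m = I k0" by blast
      have "A m = A k0" unfolding A_def using sum_rem[OF m(1), of I] sum_rem[OF k0s, of I] m(3)
        by simp
      moreover have "B m = B k0" unfolding B_def using m(3) by simp
      ultimately have "F m = 1" using k0 by (simp add: F_def)
      then show ?thesis using m by (intro exI[of _ m]) auto
    next
      case False
      let ?x = "I k0"
      have "(\<Sum>l\<in>{0..s} - {k0}. eps (I l) ?x) = 0"
        by (rule sum.neutral) (use False in \<open>auto simp: eps_def\<close>)
      then have "A k0 ?x < B k0 ?x" by (simp add: A_def B_def eps_def)
      moreover have "?x < n" using hI k0s by auto
      ultimately obtain j where j: "j < n" "A k0 j > B k0 j"
        "(\<lambda>k. A k0 k + eps ?x k - eps j k) \<in> J" "(\<lambda>k. B k0 k - eps ?x k + eps j k) \<in> J"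
        using mc AJ unfolding M_convex_def by blast
      have "\<exists>m\<in>{0..s} - {k0}. eps (I m) j \<noteq> 0"
      proof (rule ccontr)
        assume "\<not> ?thesis"
        then have "(\<Sum>l\<in>{0..s} - {k0}. eps (I l) j) = 0" by (intro sum.neutral) blast
        then show False using j(2) by (simp add: A_def B_def)
      qed
      then obtain m where m: "m \<in> {0..s} - {k0}" "eps (I m) j \<noteq> 0" by blast
      then have mj: "I m = j" by (simp add: eps_def split: if_splits)
      have ms: "m \<in> {0..s}" "m \<noteq> k0" using m by auto
      have "A m = (\<lambda>k. A k0 k + eps ?x k - eps j k)"
      proof
        fix t
        show "A m t = A k0 t + eps ?x t - eps j t"
          using sum_rem[OF ms(1), of I t] sum_rem[OF k0s, of I t] tot[OF ms, of t] mj
          by (simp add: A_def)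
      qed
      moreover have "B m = (\<lambda>k. B k0 k - eps ?x k + eps j k)"
        by (rule ext) (simp add: B_def mj)
      ultimately have "F m = 1" using j by (simp add: F_def chi_def)
      then show ?thesis using ms by (intro exI[of _ m]) auto
    qed
    then obtain m where "m < s+1" "m \<noteq> k0" "F m = 1" by blast
    then have "length (filter (\<lambda>x. x=1) (map F [0..<s+1])) \<ge> 2"
      using count_two[of k0 "s+1" m F] k0 by simp
    with len1 show False by simp
  qed
qed

lemma backward:
  assumes finJ: "finite J" and JD: "J \<subseteq> Delta r n" and pl: "pluecker n r J"
    and aJ: "a \<in> J" and bJ: "b \<in> J" and i: "i < n" and ab: "a i < b i"
  shows "\<exists>j<n. a j > b j \<and> (\<lambda>k. a k + eps i k - eps j k) \<in> J \<and>
           (\<lambda>k. b k - eps i k + eps j k) \<in> J"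
proof -
  have aD: "a \<in> Delta r n" and bD: "b \<in> Delta r n" using JD aJ bJ by auto
  define g where "g t = min (a t) (b t)" for t
  define P where "P t = a t - b t" for t
  define Q where "Q t = b t - a t" for t
  define Q' where "Q' t = Q t - eps i t" for t
  define s where "s = (\<Sum>t<n. P t)"
  have aeq: "a t = g t + P t" for t by (simp add: g_def P_def)
  have beq: "b t = g t + Q t" for t by (simp add: g_def Q_def)
  have out: "a t = 0" "b t = 0" if "t \<ge> n" for t using aD bD that by (auto simp: Delta_def)
  have sa: "(\<Sum>t<n. g t) + s = r"
    using aD by (simp add: Delta_def aeq sum.distrib s_def)
  have sb: "(\<Sum>t<n. g t) + (\<Sum>t<n. Q t) = r"
    using bD by (simp add: Delta_def beq sum.distrib)
  have sQ: "(\<Sum>t<n. Q t) = s" using sa sb by simp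
  have Qi: "Q i \<ge> 1" using ab by (simp add: Q_def)
  have epsQ: "eps i t \<le> Q t" for t using Qi by (simp add: eps_def)
  have QQ': "Q t = Q' t + eps i t" for t using epsQ[of t] by (simp add: Q'_def)
  have se: "(\<Sum>t<n. eps i t) = 1" using i by (simp add: eps_def)
  have sQ': "(\<Sum>t<n. Q' t) = s - 1"
    using sQ se by (simp add: QQ' sum.distrib)
  have s1: "s \<ge> 1"
  proof -
    have "Q i \<le> (\<Sum>t<n. Q t)" by (rule member_le_sum) (use i in auto)
    then show ?thesis using Qi sQ by simp
  qed
  have outP: "\<forall>t\<ge>n. P t = 0" and outQ': "\<forall>t\<ge>n. Q' t = 0"
    using out by (auto simp: P_def Q'_def Q_def)
  obtain g1 where g1: "\<forall>l\<in>{1..<1+s}. g1 l < n" "\<forall>t. (\<Sum>l\<in>{1..<1+s}. eps (g1 l) t) = P t"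
    using enum[OF outP, of 1] unfolding s_def by blast
  obtain g2 where g2: "\<forall>l\<in>{2..<2+(s-1)}. g2 l < n" "\<forall>t. (\<Sum>l\<in>{2..<2+(s-1)}. eps (g2 l) t) = Q' t"
    using enum[OF outQ', of 2] unfolding sQ' by blast
  have e1: "{1..<1+s} = {1..s}" by auto
  have e2: "{2..<2+(s-1)} = {2..s}" using s1 by auto
  have g1': "\<forall>l\<in>{1..s}. g1 l < n" "\<And>t. (\<Sum>l\<in>{1..s}. eps (g1 l) t) = P t"
    using g1 unfolding e1 by auto
  have g2': "\<forall>l\<in>{2..s}. g2 l < n" "\<And>t. (\<Sum>l\<in>{2..s}. eps (g2 l) t) = Q' t"
    using g2 unfolding e2 by auto
  have epsP: "eps (g1 k) t \<le> P t" if "k \<in> {1..s}" for k t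
  proof -
    have "eps (g1 k) t \<le> (\<Sum>l\<in>{1..s}. eps (g1 l) t)" by (rule member_le_sum) (use that in auto)
    then show ?thesis using g1'(2) by simp
  qed
  have Pk: "b (g1 k) < a (g1 k)" if "k \<in> {1..s}" for k
    using epsP[OF that, of "g1 k"] by (simp add: eps_def P_def)
  show ?thesis
  proof (cases "s = 1")
    case True
    define p where "p = g1 1"
    have Pp: "P t = eps p t" for t using g1'(2)[of t] True by (simp add: p_def)
    have Q'0: "Q' t = 0" for t using g2'(2)[of t] True by simp
    have "(\<lambda>k. a k + eps i k - eps p k) = b"
      by (rule ext) (simp add: aeq beq Pp QQ' Q'0)
    moreover have "(\<lambda>k. b k - eps i k + eps p k) = a"
      by (rule ext) (simp add: aeq beq Pp QQ' Q'0)
    moreover have "p < n" "b p < a p" using g1'(1) Pk[of 1] True by (auto simp: p_def)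
    ultimately show ?thesis using aJ bJ by auto
  next
    case False
    then have s2: "s \<ge> 2" using s1 by simp
    define I where "I l = (if l = 0 then i else g1 l)" for l
    have sumI: "(\<Sum>l\<in>{0..s}. eps (I l) t) = eps i t + P t" for t
    proof -
      have "{0..s} = insert 0 {1..s}" by auto
      then have "(\<Sum>l\<in>{0..s}. eps (I l) t) = eps (I 0) t + (\<Sum>l\<in>{1..s}. eps (I l) t)" by simp
      also have "(\<Sum>l\<in>{1..s}. eps (I l) t) = (\<Sum>l\<in>{1..s}. eps (g1 l) t)"
        by (rule sum.cong) (auto simp: I_def)
      finally show ?thesis using g1'(2) by (simp add: I_def)
    qed
    have hs: "s \<in> {2..r}" using s2 sa by auto
    have hgD: "g \<in> Delta (r - s) n"
      using out sa by (auto simp: Delta_def g_def)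
    have hmin: "\<forall>k<n. delta_minus J k \<le> g k"
    proof (intro allI impI)
      fix k
      have "Min ((\<lambda>\<alpha>. \<alpha> k) ` J) \<le> a k" "Min ((\<lambda>\<alpha>. \<alpha> k) ` J) \<le> b k"
        using finJ aJ bJ by (auto intro: Min_le)
      then show "delta_minus J k \<le> g k" by (simp add: delta_minus_def g_def)
    qed
    have hI: "\<forall>l\<in>{0..s}. I l < n" using i g1'(1) by (auto simp: I_def)
    have hbound: "\<forall>t<n. g t + (\<Sum>l\<in>{0..s}. eps (I l) t) + (\<Sum>l\<in>{2..s}. eps (g2 l) t)
               \<le> delta_plus J t"
    proof (intro allI impI)
      fix t
      have "a t \<le> Max ((\<lambda>\<alpha>. \<alpha> t) ` J)" "b t \<le> Max ((\<lambda>\<alpha>. \<alpha> t) ` J)"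
        using finJ aJ bJ by (auto intro: Max_ge)
      moreover have "g t + P t + Q t = max (a t) (b t)" by (simp add: g_def P_def Q_def)
      ultimately show "g t + (\<Sum>l\<in>{0..s}. eps (I l) t) + (\<Sum>l\<in>{2..s}. eps (g2 l) t)
               \<le> delta_plus J t"
        by (simp add: sumI g2'(2) delta_plus_def QQ' max_def split: if_splits)
    qed
    have kn: "krasner_null (map (\<lambda>k. chi J (\<lambda>t. g t + (\<Sum>l\<in>{0..s} - {k}. eps (I l) t)) *
          chi J (\<lambda>t. g t + eps (I k) t + (\<Sum>l\<in>{2..s}. eps (g2 l) t))) [0..<s+1])"
      using pl[unfolded pluecker_def] hs hgD hmin hI g2'(1) hbound by blast
    define A where "A k = (\<lambda>t. g t + (\<Sum>l\<in>{0..s} - {k}. eps (I l) t))" for k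
    define B where "B k = (\<lambda>t. g t + eps (I k) t + (\<Sum>l\<in>{2..s}. eps (g2 l) t))" for k
    define F where "F k = chi J (A k) * chi J (B k)" for k
    have kn': "krasner_null (map F [0..<Suc s])" using kn by (simp add: F_def[abs_def] A_def B_def del: upt_Suc)
    have "A 0 = a"
    proof
      fix t
      have h0: "A 0 t = g t + ((\<Sum>l\<in>{0..s}. eps (I l) t) - eps (I 0) t)"
        using sum_rem[of 0 s I t] by (simp add: A_def)
      have I0: "I 0 = i" by (simp add: I_def)
      have "A 0 t = g t + ((eps i t + P t) - eps i t)" using h0 unfolding sumI[of t] I0 .
      then show "A 0 t = a t" using aeq[of t] by linarith
    qed
    moreover have "B 0 = b"
    proof
      fix t
      have "B 0 t = g t + eps i t + Q' t" unfolding B_def g2'(2) by (simp add: I_def)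
      then show "B 0 t = b t" using beq[of t] QQ'[of t] by linarith
    qed
    ultimately have F0: "F 0 = 1" using aJ bJ by (simp add: F_def chi_def)
    obtain k where k: "k \<in> {1..s}" "F k = 1" using only_zero[OF F0 kn'] by blast
    define p where "p = g1 k"
    have Ik: "I k = p" using k by (simp add: I_def p_def)
    have "chi J (A k) * chi J (B k) = 1" using k(2) by (simp only: F_def)
    then have kJ: "A k \<in> J" "B k \<in> J" unfolding chi_def by (simp_all split: if_splits)
    have "A k = (\<lambda>t. a t + eps i t - eps p t)"
    proof
      fix t
      have "k \<in> {0..s}" using k by auto
      then have "A k t = g t + ((\<Sum>l\<in>{0..s}. eps (I l) t) - eps (I k) t)"
        using sum_rem[of k s I t] by (simp add: A_def)
      then have "A k t = g t + ((eps i t + P t) - eps p t)" unfolding sumI[of t] Ik .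
      then show "A k t = a t + eps i t - eps p t"
        using epsP[OF k(1), of t] aeq[of t] unfolding p_def[symmetric] by linarith
    qed
    moreover have "B k = (\<lambda>t. b t - eps i t + eps p t)"
    proof
      fix t
      have "B k t = g t + eps p t + Q' t" unfolding B_def g2'(2) Ik ..
      then show "B k t = b t - eps i t + eps p t" using beq[of t] QQ'[of t] by linarith
    qed
    moreover have "p < n" "b p < a p" using g1'(1) Pk k by (auto simp: p_def)
    ultimately show ?thesis using kJ by auto
  qed
qed

theorem theoremA:
  fixes n r :: nat and J :: "(nat \<Rightarrow> nat) set"
  assumes "n \<ge> 1" and "J \<subseteq> Delta r n" and "J \<noteq> {}"
  shows "M_convex n J \<longleftrightarrow> pluecker n r J"
proof
  have finJ: "finite J" using finite_Delta assms(2) finite_subset by blast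
  show "M_convex n J \<Longrightarrow> pluecker n r J" using forward finJ by blast
  show "pluecker n r J \<Longrightarrow> M_convex n J"
    using backward[OF finJ assms(2)] assms(3) unfolding M_convex_def by blast
qed

end
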